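(* Let $\mu>0$, let $G$ be an $n$-vertex graph and let $\mathcal{F}$ be a $\mu n$-bounded incompatibility system over $G$. Then: (i) For every path $P$ in $G$, there are at most $\sqrt{\mu}\,n$ vertices of $G$ that are $2\sqrt{\mu}$-bad for $P$; the same holds for every cycle $C$ in $G$. (ii) For every vertex $v$, there are at most $\sqrt{\mu}\,n$ vertices that are $\sqrt{\mu}$-correlated with $v$.
   Context: All graphs are finite and simple. An incompatibility system $\mathcal{F}$ over $G=(V,E)$ is a family $\{F_v\}_{v\in V}$ where each $F_v$ is a set of unordered pairs $\{e,e'\}$ of distinct edges with $e\cap e'=\{v\}$; edges $e,e'$ are incompatible if $\{e,e'\}\in F_v$ for some $v$, compatible otherwise. For a positive real $\Delta$, $\mathcal{F}$ is $\Delta$-bounded if for every vertex $v$ and edge $e\ni v$, at most $\Delta$ other edges $e'\ni v$ satisfy $\{e,e'\}\in F_v$. For a path $P=(v_0,\dots,v_\ell)$, $|P|$ denotes its number of vertices. For a vertex $w$ (not necessarily on $P$), a vertex $v_i\in V(P)$ adjacent to $w$ is a bad neighbor of $w$ in $P$ if the edge $\{w,v_i\}$ is incompatible with $\{v_i,v_{i-1}\}$ or with $\{v_i,v_{i+1}\}$ (for those of these that are edges of $P$); otherwise it is a good neighbor. For $\gamma>0$, $w$ is $\gamma$-bad for $P$ if it has at least $\gamma|P|$ bad neighbors in $P$, and $\gamma$-good otherwise. The same notions are defined for cycles (indices taken cyclically, $|C|$ the number of vertices). Two vertices $v_1,v_2$ are $\gamma$-correlated if there are at least $\gamma n$ vertices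 $w$ such that $\{v_1,w\}$ and $\{v_2,w\}$ are edges that are incompatible; otherwise they are $\gamma$-uncorrelated. *)

theory Defs
  imports Complex_Main
begin

definition simple_graph :: "'a set \<Rightarrow> 'a set set \<Rightarrow> bool" where
  "simple_graph V E \<longleftrightarrow> finite V \<and> (\<forall>e\<in>E. e \<subseteq> V \<and> card e = 2)"

definition incompat_system :: "'a set \<Rightarrow> 'a set set \<Rightarrow> ('a \<Rightarrow> 'a set set set) \<Rightarrow> bool" where
  "incompat_system V E F \<longleftrightarrow>
     (\<forall>v. F v \<noteq> {} \<longrightarrow> v \<in> V) \<and>
     (\<forall>v\<in>V. \<forall>p\<in>F v. \<exists>e e'. p = {e, e'} \<and> e \<in> E \<and> e' \<in> E \<and> e \<noteq> e' \<and> e \<inter> e' = {v})"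

definition incompatible :: "('a \<Rightarrow> 'a set set set) \<Rightarrow> 'a set \<Rightarrow> 'a set \<Rightarrow> bool" where
  "incompatible F e e' \<longleftrightarrow> (\<exists>v. {e, e'} \<in> F v)"

definition bounded_system :: "'a set \<Rightarrow> 'a set set \<Rightarrow> ('a \<Rightarrow> 'a set set set) \<Rightarrow> real \<Rightarrow> bool" where
  "bounded_system V E F \<Delta> \<longleftrightarrow>
     (\<forall>v\<in>V. \<forall>e\<in>E. v \<in> e \<longrightarrow>
        real (card {e'\<in>E. v \<in> e' \<and> e' \<noteq> e \<and> {e, e'} \<in> F v}) \<le> \<Delta>)"

definition is_path :: "'a set \<Rightarrow> 'a set set \<Rightarrow> 'a list \<Rightarrow> bool" where
  "is_path V E P \<longleftrightarrow> P \<noteq> [] \<and> distinct P \<and> set P \<subseteq> V \<and>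
     (\<forall>i. Suc i < length P \<longrightarrow> {P ! i, P ! Suc i} \<in> E)"

definition is_cycle :: "'a set \<Rightarrow> 'a set set \<Rightarrow> 'a list \<Rightarrow> bool" where
  "is_cycle V E C \<longleftrightarrow> length C \<ge> 3 \<and> distinct C \<and> set C \<subseteq> V \<and>
     (\<forall>i < length C. {C ! i, C ! (Suc i mod length C)} \<in> E)"

definition path_bad_nbr :: "'a set set \<Rightarrow> ('a \<Rightarrow> 'a set set set) \<Rightarrow> 'a list \<Rightarrow> 'a \<Rightarrow> nat \<Rightarrow> bool" where
  "path_bad_nbr E F P w i \<longleftrightarrow> i < length P \<and> {w, P ! i} \<in> E \<and>
     ((0 < i \<and> incompatible F {w, P ! i} {P ! i, P ! (i - 1)}) \<or>
      (Suc i < length P \<and> incompatible F {w, P ! i} {P ! i, P ! Suc i}))"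

definition cycle_bad_nbr :: "'a set set \<Rightarrow> ('a \<Rightarrow> 'a set set set) \<Rightarrow> 'a list \<Rightarrow> 'a \<Rightarrow> nat \<Rightarrow> bool" where
  "cycle_bad_nbr E F C w i \<longleftrightarrow> i < length C \<and> {w, C ! i} \<in> E \<and>
     (incompatible F {w, C ! i} {C ! i, C ! ((i + length C - 1) mod length C)} \<or>
      incompatible F {w, C ! i} {C ! i, C ! (Suc i mod length C)})"

definition path_gamma_bad :: "'a set set \<Rightarrow> ('a \<Rightarrow> 'a set set set) \<Rightarrow> real \<Rightarrow> 'a list \<Rightarrow> 'a \<Rightarrow> bool" where
  "path_gamma_bad E F \<gamma> P w \<longleftrightarrow>
     real (card {i. path_bad_nbr E F P w i}) \<ge> \<gamma> * real (length P)"

definition cycle_gamma_bad :: "'a set set \<Rightarrow> ('a \<Rightarrow> 'a set set set) \<Rightarrow> real \<Rightarrow> 'a list \<Rightarrow> 'a \<Rightarrow> bool" where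
  "cycle_gamma_bad E F \<gamma> C w \<longleftrightarrow>
     real (card {i. cycle_bad_nbr E F C w i}) \<ge> \<gamma> * real (length C)"

definition correlated :: "'a set \<Rightarrow> 'a set set \<Rightarrow> ('a \<Rightarrow> 'a set set set) \<Rightarrow> real \<Rightarrow> 'a \<Rightarrow> 'a \<Rightarrow> bool" where
  "correlated V E F \<gamma> v1 v2 \<longleftrightarrow>
     real (card {w\<in>V. {v1, w} \<in> E \<and> {v2, w} \<in> E \<and> incompatible F {v1, w} {v2, w}})
       \<ge> \<gamma> * real (card V)"

end

theory Submission
  imports Defs
begin

lemma dc:
  fixes S :: "'a set" and I :: "'b set" and R :: "'a \<Rightarrow> 'b \<Rightarrow> bool" and a b :: real
  assumes "finite S" "finite I"
    and "\<forall>w\<in>S. a \<le> real (card {i\<in>I. R w i})"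
    and "\<forall>i\<in>I. real (card {w\<in>S. R w i}) \<le> b"
  shows "real (card S) * a \<le> real (card I) * b"
proof -
  have c1: "\<And>w. real (card {i\<in>I. R w i}) = (\<Sum>i\<in>I. if R w i then 1 else 0)"
    using assms(2) by (simp add: sum.If_cases Int_def conj_commute)
  have c2: "\<And>i. real (card {w\<in>S. R w i}) = (\<Sum>w\<in>S. if R w i then 1 else 0)"
    using assms(1) by (simp add: sum.If_cases Int_def conj_commute)
  have "real (card S) * a = (\<Sum>w\<in>S. a)" by simp
  also have "\<dots> \<le> (\<Sum>w\<in>S. real (card {i\<in>I. R w i}))"
    using assms(3) by (intro sum_mono) auto
  also have "\<dots> = (\<Sum>w\<in>S. \<Sum>i\<in>I. (if R w i then 1 else 0::real))" using c1 by simp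
  also have "\<dots> = (\<Sum>i\<in>I. \<Sum>w\<in>S. (if R w i then 1 else 0::real))" by (rule sum.swap)
  also have "\<dots> = (\<Sum>i\<in>I. real (card {w\<in>S. R w i}))" using c2 by simp
  also have "\<dots> \<le> (\<Sum>i\<in>I. b)" using assms(4) by (intro sum_mono) auto
  also have "\<dots> = real (card I) * b" by simp
  finally show ?thesis .
qed

lemma one_side:
  assumes sg: "simple_graph V E" and isys: "incompat_system V E F"
    and bd: "bounded_system V E F D"
    and v: "v \<in> V" and fE: "f \<in> E" "v \<in> f"
  shows "real (card {w\<in>V. {w, v} \<in> E \<and> incompatible F {w, v} f}) \<le> D"
proof -
  let ?A = "{w\<in>V. {w, v} \<in> E \<and> incompatible F {w, v} f}"
  let ?T = "{e'\<in>E. v \<in> e' \<and> e' \<noteq> f \<and> {f, e'} \<in> F v}"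
  have finE: "finite E"
  proof -
    have "E \<subseteq> Pow V" using sg unfolding simple_graph_def by auto
    moreover have "finite V" using sg unfolding simple_graph_def by auto
    ultimately show ?thesis by (meson finite_Pow_iff finite_subset)
  qed
  have neq: "w \<noteq> v" if "{w, v} \<in> E" for w
  proof
    assume "w = v"
    then have "card {w, v} = 1" by simp
    moreover have "card {w, v} = 2" using that sg unfolding simple_graph_def by blast
    ultimately show False by simp
  qed
  have maps: "{w, v} \<in> ?T" if "w \<in> ?A" for w
  proof -
    from that have e: "{w, v} \<in> E" and inc: "incompatible F {w, v} f" by blast+
    from inc obtain x where x: "{{w, v}, f} \<in> F x" unfolding incompatible_def by blast
    then have "F x \<noteq> {}" by blast
    with isys have xV: "x \<in> V" unfolding incompat_system_def by blast
    have H: "\<forall>v\<in>V. \<forall>p\<in>F v. \<exists>e e'. p = {e, e'} \<and> e \<in> E \<and> e' \<in> E \<and> e \<noteq> e' \<and> e \<inter> e' = {v}"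
      using isys unfolding incompat_system_def by (rule conjunct2)
    obtain e1 e2 where pp: "{{w, v}, f} = {e1, e2} \<and> e1 \<in> E \<and> e2 \<in> E \<and> e1 \<noteq> e2 \<and> e1 \<inter> e2 = {x}"
      using H[rule_format, OF xV x] by (elim exE) (rule that)
    have p: "{{w, v}, f} = {e1, e2}" "e1 \<noteq> e2" "e1 \<inter> e2 = {x}" using pp by simp_all
    from p(1) have "({w, v} = e1 \<and> f = e2) \<or> ({w, v} = e2 \<and> f = e1)"
      by (rule doubleton_eq_iff[THEN iffD1])
    with p(2,3) have d: "{w, v} \<noteq> f" and i: "{w, v} \<inter> f = {x}" by blast+
    have "v \<in> {w, v} \<inter> f" using fE(2) by simp
    with i have "x = v" by simp
    moreover have "{f, {w, v}} = {{w, v}, f}" by (rule insert_commute)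
    ultimately have "{f, {w, v}} \<in> F v" using x by simp
    with d e show ?thesis by blast
  qed
  have inj: "inj_on (\<lambda>w. {w, v}) ?A"
  proof (rule inj_onI)
    fix x y assume x: "x \<in> ?A" and y: "y \<in> ?A" and eq: "{x, v} = {y, v}"
    have "x \<noteq> v" "y \<noteq> v" using x y neq by auto
    then show "x = y" using eq by (metis doubleton_eq_iff)
  qed
  have "card ?A \<le> card ?T"
    by (rule card_inj_on_le[OF inj]) (use maps finE in auto)
  moreover have "real (card ?T) \<le> D" using bd v fE unfolding bounded_system_def by auto
  ultimately show ?thesis by linarith
qed

lemma final_ineq:
  fixes c L n \<mu> :: real
  assumes "\<mu> > 0" "L > 0" "c * (2 * sqrt \<mu> * L) \<le> L * (2 * (\<mu> * n))"
  shows "c \<le> sqrt \<mu> * n"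
proof -
  have s: "sqrt \<mu> > 0" using assms by simp
  have eq: "sqrt \<mu> * sqrt \<mu> = \<mu>" using assms by simp
  have "(c * sqrt \<mu>) * (2 * L) \<le> (\<mu> * n) * (2 * L)" using assms(3) by (simp add: algebra_simps)
  then have "c * sqrt \<mu> \<le> \<mu> * n" using assms(2) by simp
  also have "\<mu> * n = (sqrt \<mu> * n) * sqrt \<mu>" using eq by (simp add: algebra_simps)
  finally have "c * sqrt \<mu> \<le> (sqrt \<mu> * n) * sqrt \<mu>" .
  then show ?thesis using s by (rule mult_right_le_imp_le)
qed

lemma final2:
  fixes c n \<mu> :: real
  assumes "\<mu> > 0" "n > 0" "c * (sqrt \<mu> * n) \<le> n * (\<mu> * n)"
  shows "c \<le> sqrt \<mu> * n"
proof -
  have s: "sqrt \<mu> > 0" using assms by simp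
  have eq: "sqrt \<mu> * sqrt \<mu> = \<mu>" using assms by simp
  have "(c * sqrt \<mu>) * n \<le> (\<mu> * n) * n" using assms(3) by (simp add: algebra_simps)
  then have "c * sqrt \<mu> \<le> \<mu> * n" using assms(2) by simp
  also have "\<mu> * n = (sqrt \<mu> * n) * sqrt \<mu>" using eq by (simp add: algebra_simps)
  finally have "c * sqrt \<mu> \<le> (sqrt \<mu> * n) * sqrt \<mu>" .
  then show ?thesis using s by (rule mult_right_le_imp_le)
qed

theorem proposition2p4:
  fixes V :: "'a set" and E :: "'a set set" and F :: "'a \<Rightarrow> 'a set set set" and \<mu> :: real
  assumes "\<mu> > 0"
    and "simple_graph V E"
    and "incompat_system V E F"
    and "bounded_system V E F (\<mu> * real (card V))"
  shows "(\<forall>P. is_path V E P \<longrightarrow>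
            real (card {w\<in>V. path_gamma_bad E F (2 * sqrt \<mu>) P w}) \<le> sqrt \<mu> * real (card V))
       \<and> (\<forall>C. is_cycle V E C \<longrightarrow>
            real (card {w\<in>V. cycle_gamma_bad E F (2 * sqrt \<mu>) C w}) \<le> sqrt \<mu> * real (card V))
       \<and> (\<forall>v\<in>V. real (card {u\<in>V. correlated V E F (sqrt \<mu>) v u}) \<le> sqrt \<mu> * real (card V))"
proof (intro conjI allI impI ballI)
  have finV: "finite V" using assms(2) unfolding simple_graph_def by auto
  let ?n = "real (card V)"
  note os = one_side[OF assms(2) assms(3) assms(4)]
  have EV: "\<And>e. e \<in> E \<Longrightarrow> e \<subseteq> V" using assms(2) unfolding simple_graph_def by auto
  {
    fix P assume P: "is_path V E P"
    let ?L = "length P"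
    let ?S = "{w\<in>V. path_gamma_bad E F (2 * sqrt \<mu>) P w}"
    have L: "?L > 0" using P unfolding is_path_def by auto
    have "real (card ?S) * (2 * sqrt \<mu> * ?L) \<le> real (card {..<?L}) * (2 * (\<mu> * ?n))"
    proof (rule dc[where R = "\<lambda>w i. path_bad_nbr E F P w i"])
      show "finite ?S" using finV by auto
      show "finite {..<?L}" by simp
      show "\<forall>w\<in>?S. 2 * sqrt \<mu> * ?L \<le> real (card {i\<in>{..<?L}. path_bad_nbr E F P w i})"
      proof
        fix w assume "w \<in> ?S"
        moreover have "{i\<in>{..<?L}. path_bad_nbr E F P w i} = {i. path_bad_nbr E F P w i}"
          unfolding path_bad_nbr_def by auto
        ultimately show "2 * sqrt \<mu> * ?L \<le> real (card {i\<in>{..<?L}. path_bad_nbr E F P w i})"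
          unfolding path_gamma_bad_def by simp
      qed
      show "\<forall>i\<in>{..<?L}. real (card {w\<in>?S. path_bad_nbr E F P w i}) \<le> 2 * (\<mu> * ?n)"
      proof
        fix i assume i: "i \<in> {..<?L}"
        have vV: "P ! i \<in> V" using P i unfolding is_path_def by auto
        let ?A = "{w\<in>V. {w, P!i} \<in> E \<and> incompatible F {w, P!i} {P!i, P!(i-1)} \<and> 0 < i}"
        let ?B = "{w\<in>V. {w, P!i} \<in> E \<and> incompatible F {w, P!i} {P!i, P!Suc i} \<and> Suc i < ?L}"
        have sub: "{w\<in>?S. path_bad_nbr E F P w i} \<subseteq> ?A \<union> ?B"
          unfolding path_bad_nbr_def by auto
        have cA: "real (card ?A) \<le> \<mu> * ?n"
        proof (cases "0 < i")
          case True
          have "Suc (i-1) < length P" using True i by simp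
          then have "{P!(i-1), P!Suc (i-1)} \<in> E" using P unfolding is_path_def by blast
          then have "{P!(i-1), P!i} \<in> E" using True by simp
          then have f: "{P!i, P!(i-1)} \<in> E" using True by (simp add: insert_commute)
          have "real (card {w\<in>V. {w, P!i} \<in> E \<and> incompatible F {w, P!i} {P!i, P!(i-1)}}) \<le> \<mu> * ?n"
            by (rule os[OF vV f]) simp
          moreover have "?A = {w\<in>V. {w, P!i} \<in> E \<and> incompatible F {w, P!i} {P!i, P!(i-1)}}"
            using True by auto
          ultimately show ?thesis by simp
        next
          case False
          then have "?A = {}" by auto
          then have "card ?A = 0" by (simp only: card.empty)
          moreover have "0 \<le> \<mu> * ?n" using assms(1) by simp
          ultimately show ?thesis by linarith
        qed
        have cB: "real (card ?B) \<le> \<mu> * ?n"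
        proof (cases "Suc i < ?L")
          case True
          have f: "{P!i, P!Suc i} \<in> E" using P True unfolding is_path_def by auto
          have "real (card {w\<in>V. {w, P!i} \<in> E \<and> incompatible F {w, P!i} {P!i, P!Suc i}}) \<le> \<mu> * ?n"
            by (rule os[OF vV f]) simp
          moreover have "?B = {w\<in>V. {w, P!i} \<in> E \<and> incompatible F {w, P!i} {P!i, P!Suc i}}"
            using True by auto
          ultimately show ?thesis by simp
        next
          case False
          then have "?B = {}" by auto
          then have "card ?B = 0" by (simp only: card.empty)
          moreover have "0 \<le> \<mu> * ?n" using assms(1) by simp
          ultimately show ?thesis by linarith
        qed
        have "card {w\<in>?S. path_bad_nbr E F P w i} \<le> card (?A \<union> ?B)"
          by (rule card_mono) (use finV sub in auto)
        also have "\<dots> \<le> card ?A + card ?B" by (rule card_Un_le)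
        finally show "real (card {w\<in>?S. path_bad_nbr E F P w i}) \<le> 2 * (\<mu> * ?n)"
          using cA cB by linarith
      qed
    qed
    then have X: "real (card ?S) * (2 * sqrt \<mu> * real ?L) \<le> real ?L * (2 * (\<mu> * ?n))" by simp
    have L': "real ?L > 0" using L by simp
    show "real (card ?S) \<le> sqrt \<mu> * ?n" by (rule final_ineq[OF assms(1) L' X])
  }
  {
    fix P assume P: "is_cycle V E P"
    let ?L = "length P"
    let ?S = "{w\<in>V. cycle_gamma_bad E F (2 * sqrt \<mu>) P w}"
    have L: "?L > 0" using P unfolding is_cycle_def by auto
    have "real (card ?S) * (2 * sqrt \<mu> * ?L) \<le> real (card {..<?L}) * (2 * (\<mu> * ?n))"
    proof (rule dc[where R = "\<lambda>w i. cycle_bad_nbr E F P w i"])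
      show "finite ?S" using finV by auto
      show "finite {..<?L}" by simp
      show "\<forall>w\<in>?S. 2 * sqrt \<mu> * ?L \<le> real (card {i\<in>{..<?L}. cycle_bad_nbr E F P w i})"
      proof
        fix w assume "w \<in> ?S"
        moreover have "{i\<in>{..<?L}. cycle_bad_nbr E F P w i} = {i. cycle_bad_nbr E F P w i}"
          unfolding cycle_bad_nbr_def by auto
        ultimately show "2 * sqrt \<mu> * ?L \<le> real (card {i\<in>{..<?L}. cycle_bad_nbr E F P w i})"
          unfolding cycle_gamma_bad_def by simp
      qed
      show "\<forall>i\<in>{..<?L}. real (card {w\<in>?S. cycle_bad_nbr E F P w i}) \<le> 2 * (\<mu> * ?n)"
      proof
        fix i assume i: "i \<in> {..<?L}"
        have vV: "P ! i \<in> V" using P i unfolding is_cycle_def by auto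
        let ?j = "(i + ?L - 1) mod ?L"
        let ?A = "{w\<in>V. {w, P!i} \<in> E \<and> incompatible F {w, P!i} {P!i, P!?j}}"
        let ?B = "{w\<in>V. {w, P!i} \<in> E \<and> incompatible F {w, P!i} {P!i, P!(Suc i mod ?L)}}"
        have sub: "{w\<in>?S. cycle_bad_nbr E F P w i} \<subseteq> ?A \<union> ?B"
          unfolding cycle_bad_nbr_def by auto
        have j: "?j < ?L" using L by simp
        have "Suc ?j mod ?L = Suc (i + ?L - 1) mod ?L" by (simp add: mod_Suc_eq)
        also have "Suc (i + ?L - 1) = i + ?L" using L by simp
        also have "(i + ?L) mod ?L = i" using i by simp
        finally have sj: "Suc ?j mod ?L = i" .
        have "{P!?j, P!(Suc ?j mod ?L)} \<in> E" using P j unfolding is_cycle_def by blast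
        then have fA: "{P!i, P!?j} \<in> E" using sj by (simp add: insert_commute)
        have fB: "{P!i, P!(Suc i mod ?L)} \<in> E" using P i unfolding is_cycle_def by auto
        have cA: "real (card ?A) \<le> \<mu> * ?n" by (rule os[OF vV fA]) simp
        have cB: "real (card ?B) \<le> \<mu> * ?n" by (rule os[OF vV fB]) simp
        have "card {w\<in>?S. cycle_bad_nbr E F P w i} \<le> card (?A \<union> ?B)"
          by (rule card_mono) (use finV sub in auto)
        also have "\<dots> \<le> card ?A + card ?B" by (rule card_Un_le)
        finally show "real (card {w\<in>?S. cycle_bad_nbr E F P w i}) \<le> 2 * (\<mu> * ?n)"
          using cA cB by linarith
      qed
    qed
    then have X: "real (card ?S) * (2 * sqrt \<mu> * real ?L) \<le> real ?L * (2 * (\<mu> * ?n))" by simp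
    have L': "real ?L > 0" using L by simp
    show "real (card ?S) \<le> sqrt \<mu> * ?n" by (rule final_ineq[OF assms(1) L' X])
  }
  {
    fix v assume v: "v \<in> V"
    let ?S = "{u\<in>V. correlated V E F (sqrt \<mu>) v u}"
    let ?R = "\<lambda>u w. {v, w} \<in> E \<and> {u, w} \<in> E \<and> incompatible F {v, w} {u, w}"
    have n: "?n > 0" using v finV by (simp add: card_gt_0_iff) blast
    have "real (card ?S) * (sqrt \<mu> * ?n) \<le> real (card V) * (\<mu> * ?n)"
    proof (rule dc[where R = ?R])
      show "finite ?S" using finV by auto
      show "finite V" by (rule finV)
      show "\<forall>u\<in>?S. sqrt \<mu> * ?n \<le> real (card {w\<in>V. ?R u w})"
        unfolding correlated_def by auto
      show "\<forall>w\<in>V. real (card {u\<in>?S. ?R u w}) \<le> \<mu> * ?n"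
      proof
        fix w assume w: "w \<in> V"
        show "real (card {u\<in>?S. ?R u w}) \<le> \<mu> * ?n"
        proof (cases "{v, w} \<in> E")
          case True
          have f: "{w, v} \<in> E" using True by (simp add: insert_commute)
          have c: "real (card {u\<in>V. {u, w} \<in> E \<and> incompatible F {u, w} {w, v}}) \<le> \<mu> * ?n"
            by (rule os[OF w f]) simp
          have "card {u\<in>?S. ?R u w} \<le> card {u\<in>V. {u, w} \<in> E \<and> incompatible F {u, w} {w, v}}"
            by (rule card_mono) (use finV in \<open>auto simp: incompatible_def insert_commute\<close>)
          with c show ?thesis by linarith
        next
          case False
          then have "{u\<in>?S. ?R u w} = {}" by auto
          then have "card {u\<in>?S. ?R u w} = 0" by (simp only: card.empty)
          moreover have "0 \<le> \<mu> * ?n" using assms(1) by simp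
          ultimately show ?thesis by linarith
        qed
      qed
    qed
    then show "real (card ?S) \<le> sqrt \<mu> * ?n" by (rule final2[OF assms(1) n])
  }
qed

end
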